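(* Let $c:\mathcal J\to\mathbb Q$ be a consistent map. Then $\Phi_c(\pi(r))=\Omega(r)$ for all $r\in\mathbb Q^\times$ (i.e., $\Phi_c$ extends $\Omega$) if and only if $c(\mathbb Q,p)=-1$ for every non-Archimedean place (prime) $p$ of $\mathbb Q$.
   Context: Let $\overline{\mathbb Q}$ be an algebraic closure of $\mathbb Q$, $A$ the ring of algebraic integers, $\mathcal S=\overline{\mathbb Q}^\times/A^\times$ (a $\mathbb Q$-vector space, written multiplicatively with scalar action $\alpha\mapsto\alpha^r$), and $\pi:\overline{\mathbb Q}^\times\to\mathcal S$ the canonical map. $\Omega:\mathbb Q^\times\to\mathbb Z$ is the unique group homomorphism with $\Omega(p)=1$ for every prime $p$ (and $\Omega(-1)=0$), which is well defined on $\pi(\mathbb Q^\times)$. For a number field $K$ and non-Archimedean place $v$ of $K$, $p_v$ is the prime below $v$, $K_v$ the completion, and $\|\cdot\|_v$ the extension to $K_v$ of the $p_v$-adic absolute value on $\mathbb Q_{p_v}$. Let $\mathcal H_K=\pi(K^\times)$, $\mathcal S_K=\{\alpha\in\mathcal S:\alpha^n\in\mathcal H_K\text{ for some }n\in\mathbb N\}$, and $\|\alpha\|_v=\|\alpha^n\|_v^{1/n}$ for $\alpha\in\mathcal S_K$ with $\alpha^n\in\mathcal H_K$. Let $\mathcal J=\{(K,v)\}$ be the set of pairs of a number field and a non-Archimedean place of it. A map $c:\mathcal J\to\mathbb Q$ is consistent if $c(K,v)=\sum_{w\mid v}c(L,w)$ for all number fields $K$, finite extensions $L/K$ and non-Archimedean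 places $v$ of $K$. For consistent $c$, $\Phi_c:\mathcal S\to\mathbb Q$ is $\Phi_c(\alpha)=\sum_{v}\frac{c(K,v)}{\log p_v}\log\|\alpha\|_v$ over non-Archimedean places of any number field $K$ with $\alpha\in\mathcal S_K$ (independent of $K$). *)

theory Defs
  imports "HOL-Computational_Algebra.Computational_Algebra"
begin

text \<open>Ambient algebraic closure: the algebraic numbers inside the complex numbers.\<close>

definition number_field :: "complex set \<Rightarrow> bool" where
  "number_field K \<longleftrightarrow>
     0 \<in> K \<and> 1 \<in> K \<and>
     (\<forall>x\<in>K. \<forall>y\<in>K. x + y \<in> K \<and> x - y \<in> K \<and> x * y \<in> K) \<and>
     (\<forall>x\<in>K. x \<noteq> 0 \<longrightarrow> inverse x \<in> K) \<and>
     (\<exists>bs :: complex list. \<forall>x\<in>K. \<exists>q :: nat \<Rightarrow> rat.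
         x = (\<Sum>i<length bs. of_rat (q i) * bs ! i))"

definition QQ :: "complex set" where
  "QQ = range (of_rat :: rat \<Rightarrow> complex)"

definition padic_val :: "nat \<Rightarrow> rat \<Rightarrow> int" where
  "padic_val p r = (case quotient_of r of (a, b) \<Rightarrow>
      int (multiplicity (int p) a) - int (multiplicity (int p) b))"

definition padic_abs :: "nat \<Rightarrow> rat \<Rightarrow> real" where
  "padic_abs p r = (if r = 0 then 0 else real p powr (- real_of_int (padic_val p r)))"

text \<open>A non-Archimedean place v of a number field K is represented by its normalized absolute
  value, i.e. the restriction to K of the absolute value on the completion K_v that extends the
  p_v-adic absolute value of Q_{p_v}.\<close>
definition nonarch_place :: "complex set \<Rightarrow> (complex \<Rightarrow> real) \<Rightarrow> bool" where
  "nonarch_place K v \<longleftrightarrow>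
     (\<forall>x. x \<notin> K \<longrightarrow> v x = 0) \<and>
     (\<forall>x\<in>K. 0 \<le> v x \<and> (v x = 0 \<longleftrightarrow> x = 0)) \<and>
     (\<forall>x\<in>K. \<forall>y\<in>K. v (x * y) = v x * v y) \<and>
     (\<forall>x\<in>K. \<forall>y\<in>K. v (x + y) \<le> max (v x) (v y)) \<and>
     (\<exists>p. prime p \<and> (\<forall>q. v (of_rat q) = padic_abs p q))"

definition place_prime :: "(complex \<Rightarrow> real) \<Rightarrow> nat" where
  "place_prime v = (THE p. prime p \<and> (\<forall>q. v (of_rat q) = padic_abs p q))"

definition alg_int :: "complex \<Rightarrow> bool" where
  "alg_int x \<longleftrightarrow> (\<exists>p :: int poly. lead_coeff p = 1 \<and> poly (map_poly of_int p) x = 0)"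

definition alg_int_unit :: "complex \<Rightarrow> bool" where
  "alg_int_unit u \<longleftrightarrow> u \<noteq> 0 \<and> alg_int u \<and> alg_int (inverse u)"

text \<open>Elements of S = Qbar^*/A^* are represented as the cosets (sets of complex numbers);
  pi is the canonical map.\<close>
definition piS :: "complex \<Rightarrow> complex set" where
  "piS x = {y. y \<noteq> 0 \<and> alg_int_unit (y / x)}"

definition S_set :: "complex set set" where
  "S_set = piS ` {x. algebraic x \<and> x \<noteq> 0}"

text \<open>n-th power in S (well defined on cosets).\<close>
definition powS :: "complex set \<Rightarrow> nat \<Rightarrow> complex set" where
  "powS \<alpha> n = piS ((SOME x. x \<in> \<alpha>) ^ n)"

definition in_SK :: "complex set \<Rightarrow> complex set \<Rightarrow> bool" where
  "in_SK K \<alpha> \<longleftrightarrow> \<alpha> \<in> S_set \<and> (\<exists>n>0. \<exists>y\<in>K. y \<noteq> 0 \<and> powS \<alpha> n = piS y)"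

definition normS :: "complex set \<Rightarrow> (complex \<Rightarrow> real) \<Rightarrow> complex set \<Rightarrow> real" where
  "normS K v \<alpha> = (case (SOME (n, y). n > 0 \<and> y \<in> K \<and> y \<noteq> 0 \<and> powS \<alpha> n = piS y) of
      (n, y) \<Rightarrow> v y powr (1 / real n))"

definition consistent :: "(complex set \<times> (complex \<Rightarrow> real) \<Rightarrow> rat) \<Rightarrow> bool" where
  "consistent c \<longleftrightarrow>
     (\<forall>K L v. number_field K \<longrightarrow> number_field L \<longrightarrow> K \<subseteq> L \<longrightarrow> nonarch_place K v \<longrightarrow>
        c (K, v) = (\<Sum>w \<in> {w. nonarch_place L w \<and> (\<forall>x\<in>K. w x = v x)}. c (L, w)))"

text \<open>Phi_c(alpha) = sum over non-Archimedean places v of K of c(K,v)/log p_v * log ||alpha||_v,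
  for any number field K with alpha in S_K (here chosen by Hilbert choice; only the finitely many
  places with nonzero log ||alpha||_v contribute).\<close>
definition PhiS :: "(complex set \<times> (complex \<Rightarrow> real) \<Rightarrow> rat) \<Rightarrow> complex set \<Rightarrow> real" where
  "PhiS c \<alpha> = (let K = (SOME K. number_field K \<and> in_SK K \<alpha>) in
      (\<Sum>v \<in> {v. nonarch_place K v \<and> normS K v \<alpha> \<noteq> 1}.
          real_of_rat (c (K, v)) / ln (real (place_prime v)) * ln (normS K v \<alpha>)))"

definition Omega :: "rat \<Rightarrow> int" where
  "Omega r = (case quotient_of r of (a, b) \<Rightarrow>
      int (size (prime_factorization (nat \<bar>a\<bar>))) - int (size (prime_factorization (nat \<bar>b\<bar>))))"

end

theory Submission
  imports Defs "Jordan_Normal_Form.Char_Poly"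
begin

lemma det_trick:
  fixes g :: "nat \<Rightarrow> complex" and z :: complex and C :: "nat \<Rightarrow> nat \<Rightarrow> int"
  assumes "i0 < N" "g i0 \<noteq> 0" "\<forall>i<N. z * g i = (\<Sum>j<N. of_int (C i j) * g j)"
  shows "alg_int z"
proof -
  define A :: "int mat" where "A = mat N N (\<lambda>(i,j). C i j)"
  define AC :: "complex mat" where "AC = map_mat of_int A"
  define v where "v = vec N g"
  have A: "A \<in> carrier_mat N N" unfolding A_def by auto
  have AC: "AC \<in> carrier_mat N N" unfolding AC_def using A by auto
  have "AC *\<^sub>v v = z \<cdot>\<^sub>v v"
  proof (rule eq_vecI)
    fix i assume i: "i < dim_vec (z \<cdot>\<^sub>v v)"
    hence iN: "i < N" by (simp add: v_def)
    have "(AC *\<^sub>v v) $ i = (\<Sum>j<N. of_int (C i j) * g j)"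
      using iN unfolding AC_def A_def v_def
      by (simp add: scalar_prod_def atLeast0LessThan)
    also have "\<dots> = z * g i" using assms(3) iN by simp
    finally show "(AC *\<^sub>v v) $ i = (z \<cdot>\<^sub>v v) $ i" using iN by (simp add: v_def)
  qed (simp add: AC_def A_def v_def)
  moreover have "v \<noteq> 0\<^sub>v N"
  proof
    assume "v = 0\<^sub>v N"
    hence "v $ i0 = 0" using assms(1) by simp
    thus False using assms(1,2) by (simp add: v_def)
  qed
  ultimately have "eigenvector AC v z" unfolding eigenvector_def
    using AC by (simp add: v_def)
  hence "eigenvalue AC z" unfolding eigenvalue_def by blast
  hence "poly (char_poly AC) z = 0" using eigenvalue_root_char_poly[OF AC] by simp
  moreover have "char_poly AC = map_poly of_int (char_poly A)"
    unfolding AC_def by (rule of_int_hom.char_poly_hom[OF A])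
  moreover have "lead_coeff (char_poly A) = 1" using degree_monic_char_poly[OF A] by simp
  ultimately show ?thesis unfolding alg_int_def by metis
qed

lemma alg_int_powers:
  fixes a :: complex
  assumes "alg_int a"
  obtains m where "m > 0" "\<forall>s<m. \<exists>c::nat\<Rightarrow>int. a ^ Suc s = (\<Sum>i<m. of_int (c i) * a ^ i)"
proof -
  obtain p :: "int poly" where p: "lead_coeff p = 1" "poly (map_poly of_int p) a = 0"
    using assms unfolding alg_int_def by blast
  define m where "m = degree p"
  have m0: "m > 0"
  proof (rule ccontr)
    assume "\<not> m > 0"
    hence "degree p = 0" by (simp add: m_def)
    hence "poly (map_poly (of_int :: int \<Rightarrow> complex) p) a = of_int (coeff p 0)"
      by (simp add: poly_altdef degree_map_poly)
    thus False using p \<open>degree p = 0\<close> by simp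
  qed
  have dq: "degree (map_poly (of_int :: int \<Rightarrow> complex) p) = m"
    by (simp add: m_def degree_map_poly)
  have "0 = (\<Sum>i\<le>m. coeff (map_poly (of_int :: int \<Rightarrow> complex) p) i * a ^ i)"
    using p(2) by (simp add: poly_altdef dq m_def)
  also have "\<dots> = (\<Sum>i<m. of_int (coeff p i) * a ^ i) + a ^ m"
    using p(1) by (simp add: lessThan_Suc_atMost[symmetric] m_def)
  finally have am: "a ^ m = (\<Sum>i<m. of_int (- coeff p i) * a ^ i)"
    by (simp add: sum_negf eq_neg_iff_add_eq_0 add.commute)
  have "\<forall>s<m. \<exists>c::nat\<Rightarrow>int. a ^ Suc s = (\<Sum>i<m. of_int (c i) * a ^ i)"
  proof (intro allI impI)
    fix s assume s: "s < m"
    show "\<exists>c::nat\<Rightarrow>int. a ^ Suc s = (\<Sum>i<m. of_int (c i) * a ^ i)"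
    proof (cases "Suc s < m")
      case True
      have "(\<Sum>i<m. of_int (if i = Suc s then 1 else 0) * a ^ i) = a ^ Suc s"
      proof -
        have "(\<Sum>i<m. of_int (if i = Suc s then 1 else 0) * a ^ i) = (\<Sum>i<m. if i = Suc s then a ^ i else 0)"
          by (rule sum.cong) auto
        also have "\<dots> = a ^ Suc s" using True by simp
        finally show ?thesis .
      qed
      thus ?thesis by metis
    next
      case False
      hence "Suc s = m" using s by simp
      thus ?thesis using am by metis
    qed
  qed
  thus ?thesis using m0 that by blast
qed

lemma sum_div_mod:
  fixes F :: "nat \<Rightarrow> nat \<Rightarrow> 'a::comm_monoid_add"
  shows "(\<Sum>l<m*k. F (l div k) (l mod k)) = (\<Sum>i<m. \<Sum>j<k. F i j)"
proof (induction m)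
  case 0 then show ?case by simp
next
  case (Suc m)
  have "(\<Sum>l<Suc m*k. F (l div k) (l mod k)) = (\<Sum>l<m*k. F (l div k) (l mod k)) + (\<Sum>l\<in>{m*k..<m*k+k}. F (l div k) (l mod k))"
    by (simp add: atLeast0LessThan[symmetric] sum.atLeastLessThan_concat add.commute)
  also have "(\<Sum>l\<in>{m*k..<m*k+k}. F (l div k) (l mod k)) = (\<Sum>j<k. F ((m*k+j) div k) ((m*k+j) mod k))"
    by (subst sum.atLeastLessThan_shift_0) (simp add: atLeast0LessThan)
  also have "\<dots> = (\<Sum>j<k. F m j)"
    by (rule sum.cong) auto
  finally show ?case using Suc by simp
qed

lemma alg_int_mult:
  fixes a b :: complex
  assumes "alg_int a" "alg_int b"
  shows "alg_int (a * b)"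
proof -
  obtain m where m: "m > 0" "\<forall>s<m. \<exists>c::nat\<Rightarrow>int. a ^ Suc s = (\<Sum>i<m. of_int (c i) * a ^ i)"
    using alg_int_powers[OF assms(1)] by blast
  obtain k where k: "k > 0" "\<forall>s<k. \<exists>c::nat\<Rightarrow>int. b ^ Suc s = (\<Sum>i<k. of_int (c i) * b ^ i)"
    using alg_int_powers[OF assms(2)] by blast
  define g where "g l = a ^ (l div k) * b ^ (l mod k)" for l
  have "\<forall>l<m*k. \<exists>e::nat\<Rightarrow>int. a * b * g l = (\<Sum>j<m*k. of_int (e j) * g j)"
  proof (intro allI impI)
    fix l assume l: "l < m * k"
    have s: "l div k < m" using l k(1) by (simp add: div_less_iff_less_mult mult.commute)
    have t: "l mod k < k" using k(1) by simp
    obtain c where c: "a ^ Suc (l div k) = (\<Sum>i<m. of_int (c i) * a ^ i)" using m(2) s by blast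
    obtain d where d: "b ^ Suc (l mod k) = (\<Sum>i<k. of_int (d i) * b ^ i)" using k(2) t by blast
    have "a * b * g l = a ^ Suc (l div k) * b ^ Suc (l mod k)" by (simp add: g_def)
    also have "\<dots> = (\<Sum>i<m. \<Sum>j<k. of_int (c i * d j) * (a ^ i * b ^ j))"
      unfolding c d sum_product by (simp add: algebra_simps)
    also have "\<dots> = (\<Sum>j<m*k. of_int (c (j div k) * d (j mod k)) * g j)"
      unfolding g_def by (rule sum_div_mod[symmetric])
    finally show "\<exists>e::nat\<Rightarrow>int. a * b * g l = (\<Sum>j<m*k. of_int (e j) * g j)"
      by (rule exI[of _ "\<lambda>j. c (j div k) * d (j mod k)"])
  qed
  then obtain C where C: "\<forall>l<m*k. a * b * g l = (\<Sum>j<m*k. of_int (C l j) * g j)"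
    by metis
  show ?thesis
    by (rule det_trick[of 0 "m*k" g]) (use m k C in \<open>auto simp: g_def\<close>)
qed

lemma mult_int_nat: "multiplicity (int p) (int n) = multiplicity p n"
proof -
  have "{k. int p ^ k dvd int n} = {k. p ^ k dvd n}"
    by (metis of_nat_power int_dvd_int_iff)
  thus ?thesis unfolding multiplicity_def by simp
qed

lemma mult_int_abs: "multiplicity (int p) a = multiplicity p (nat \<bar>a\<bar>)"
proof -
  have "multiplicity (int p) a = multiplicity (int p) \<bar>a\<bar>"
    using multiplicity_normalize_right[of "int p" a] by simp
  also have "\<dots> = multiplicity (int p) (int (nat \<bar>a\<bar>))" by simp
  finally show ?thesis by (simp only: mult_int_nat)
qed

lemma padic_val_frac:
  assumes p: "prime p" and a: "a \<noteq> 0" and b: "b \<noteq> 0"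
  shows "padic_val p (of_int a / of_int b) = int (multiplicity (int p) a) - int (multiplicity (int p) b)"
proof -
  obtain a' b' where q: "quotient_of (of_int a / of_int b) = (a', b')" by (cases "quotient_of (of_int a / of_int b)")
  have b'0: "b' > 0" using q quotient_of_denom_pos by blast
  have eq: "(of_int a / of_int b :: rat) = of_int a' / of_int b'" using quotient_of_div[OF q] .
  have a'0: "a' \<noteq> 0" using eq a b by auto
  have "a * b' = a' * b"
  proof -
    have "(of_int a * of_int b' :: rat) = of_int a' * of_int b"
      using eq b b'0 by (simp add: field_simps)
    thus ?thesis by (metis of_int_eq_iff of_int_mult)
  qed
  hence "multiplicity (int p) (a * b') = multiplicity (int p) (a' * b)" by simp
  moreover have pe: "prime_elem (int p)" using p by simp
  ultimately have "multiplicity (int p) a + multiplicity (int p) b' = multiplicity (int p) a' + multiplicity (int p) b"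
    using a b a'0 b'0 by (simp add: prime_elem_multiplicity_mult_distrib)
  thus ?thesis unfolding padic_val_def q by simp
qed

lemma rat_frac: fixes r :: rat obtains a b :: int where "b \<noteq> 0" "r = of_int a / of_int b"
proof -
  obtain a b where q: "quotient_of r = (a, b)" by (cases "quotient_of r")
  have "b > 0" using q quotient_of_denom_pos by blast
  moreover have "r = of_int a / of_int b" using quotient_of_div[OF q] .
  ultimately show ?thesis by (intro that) auto
qed

lemma padic_val_mult:
  assumes p: "prime p" and "r \<noteq> 0" "s \<noteq> 0"
  shows "padic_val p (r * s) = padic_val p r + padic_val p s"
proof -
  obtain a b where ab: "b \<noteq> 0" "r = of_int a / of_int b" by (rule rat_frac)
  obtain c d where cd: "d \<noteq> 0" "s = of_int c / of_int d" by (rule rat_frac)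
  have a: "a \<noteq> 0" and c: "c \<noteq> 0" using assms ab cd by auto
  have "r * s = of_int (a * c) / of_int (b * d)" using ab cd by simp
  hence "padic_val p (r * s) = int (multiplicity (int p) (a * c)) - int (multiplicity (int p) (b * d))"
    using padic_val_frac[OF p, of "a * c" "b * d"] a c ab cd by simp
  moreover have pe: "prime_elem (int p)" using p by simp
  moreover have "padic_val p r = int (multiplicity (int p) a) - int (multiplicity (int p) b)"
    using padic_val_frac[OF p a ab(1)] ab by simp
  moreover have "padic_val p s = int (multiplicity (int p) c) - int (multiplicity (int p) d)"
    using padic_val_frac[OF p c cd(1)] cd by simp
  ultimately show ?thesis using ab cd a c
    by (simp add: prime_elem_multiplicity_mult_distrib)
qed

lemma mult_sum_ge:
  fixes x y :: int
  assumes "x + y \<noteq> 0" "\<not> is_unit q"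
  shows "multiplicity q (x + y) \<ge> min (multiplicity q x) (multiplicity q y)"
proof (rule multiplicity_geI[OF assms])
  have "q ^ min (multiplicity q x) (multiplicity q y) dvd x"
    using dvd_trans[OF le_imp_power_dvd[OF min.cobounded1] multiplicity_dvd] .
  moreover have "q ^ min (multiplicity q x) (multiplicity q y) dvd y"
    using dvd_trans[OF le_imp_power_dvd[OF min.cobounded2] multiplicity_dvd] .
  ultimately show "q ^ min (multiplicity q x) (multiplicity q y) dvd x + y" by simp
qed

lemma padic_val_add:
  assumes p: "prime p" and "r \<noteq> 0" "s \<noteq> 0" "r + s \<noteq> 0"
  shows "padic_val p (r + s) \<ge> min (padic_val p r) (padic_val p s)"
proof -
  obtain a b where ab: "b \<noteq> 0" "r = of_int a / of_int b" by (rule rat_frac)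
  obtain c d where cd: "d \<noteq> 0" "s = of_int c / of_int d" by (rule rat_frac)
  have a: "a \<noteq> 0" and c: "c \<noteq> 0" using assms ab cd by auto
  have rs: "r + s = of_int (a * d + c * b) / of_int (b * d)" using ab cd by (simp add: field_simps)
  have n0: "a * d + c * b \<noteq> 0"
  proof
    assume "a * d + c * b = 0"
    hence "r + s = of_int 0 / of_int (b * d)" using rs by simp
    thus False using assms(4) by simp
  qed
  have pe: "prime_elem (int p)" using p by simp
  define M where "M x = int (multiplicity (int p) x)" for x
  have "padic_val p (r + s) = M (a * d + c * b) - M (b * d)"
    unfolding rs M_def by (rule padic_val_frac[OF p n0]) (use ab cd in simp)
  also have "M (b * d) = M b + M d" using ab cd pe by (simp add: M_def prime_elem_multiplicity_mult_distrib)
  finally have "padic_val p (r + s) = M (a * d + c * b) - M b - M d" by simp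
  moreover have "M (a * d + c * b) \<ge> min (M (a*d)) (M (c*b))"
  proof -
    have "\<not> is_unit (int p)" using pe by (rule prime_elem_not_unit)
    from mult_sum_ge[OF n0 this] show ?thesis unfolding M_def by linarith
  qed
  moreover have "M (a*d) = M a + M d" "M (c * b) = M c + M b"
    using a c ab cd pe by (simp_all add: M_def prime_elem_multiplicity_mult_distrib)
  moreover have "padic_val p r = M a - M b" "padic_val p s = M c - M d"
    using ab cd a c p by (simp_all add: padic_val_frac M_def)
  ultimately show ?thesis by linarith
qed

lemma padic_abs_nonneg: "padic_abs p r \<ge> 0"
  by (simp add: padic_abs_def)

lemma padic_abs_pos: "prime p \<Longrightarrow> r \<noteq> 0 \<Longrightarrow> padic_abs p r > 0"
  unfolding padic_abs_def using prime_gt_0_nat by auto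

lemma padic_abs_mult: assumes "prime p" shows "padic_abs p (r * s) = padic_abs p r * padic_abs p s"
proof (cases "r = 0 \<or> s = 0")
  case True thus ?thesis by (auto simp: padic_abs_def)
next
  case False thus ?thesis
    by (simp add: padic_abs_def padic_val_mult assms powr_add[symmetric] algebra_simps)
qed

lemma padic_abs_add: assumes "prime p"
  shows "padic_abs p (r + s) \<le> max (padic_abs p r) (padic_abs p s)"
proof (cases "r = 0 \<or> s = 0 \<or> r + s = 0")
  case True
  thus ?thesis using padic_abs_nonneg[of p r] padic_abs_nonneg[of p s]
    by (auto simp: le_max_iff_disj) (simp add: padic_abs_def)
next
  case False
  hence h: "padic_val p (r + s) \<ge> min (padic_val p r) (padic_val p s)"
    using padic_val_add[OF assms] by blast
  have p1: "real p > 1" using assms prime_gt_1_nat by auto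
  have "padic_abs p (r + s) = real p powr (- real_of_int (padic_val p (r + s)))"
    using False by (simp add: padic_abs_def)
  also have "\<dots> \<le> real p powr (- real_of_int (min (padic_val p r) (padic_val p s)))"
    using h p1 by (intro powr_mono) auto
  also have "\<dots> \<le> max (padic_abs p r) (padic_abs p s)"
    using False by (auto simp: padic_abs_def min_def)
  finally show ?thesis .
qed

lemma padic_val_int: "prime p \<Longrightarrow> a \<noteq> 0 \<Longrightarrow> padic_val p (of_int a) = int (multiplicity (int p) a)"
  using padic_val_frac[of p a 1] by simp

lemma padic_abs_int_le1: assumes "prime p" shows "padic_abs p (of_int a) \<le> 1"
proof (cases "a = 0")
  case True thus ?thesis by (simp add: padic_abs_def)
next
  case False
  have p1: "real p \<ge> 1" using prime_gt_1_nat[OF assms] by simp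
  have "1 \<le> real p powr real (multiplicity (int p) a)" using p1 by (rule ge_one_powr_ge_zero) simp
  thus ?thesis using False assms by (simp add: padic_abs_def padic_val_int powr_minus field_simps)
qed

lemma padic_val_prime: assumes "prime p" "prime q"
  shows "padic_val p (of_nat q) = (if p = q then 1 else 0)"
proof -
  have "padic_val p (of_nat q) = int (multiplicity (int p) (int q))"
    using padic_val_int[OF assms(1), of "int q"] assms(2) by (simp add: prime_gt_0_nat)
  also have "\<dots> = int (multiplicity p q)" by (simp add: mult_int_nat)
  also have "\<dots> = (if p = q then 1 else 0)"
    using assms by (auto simp: multiplicity_self prime_multiplicity_other)
  finally show ?thesis .
qed

lemma padic_abs_unique: assumes "prime p" "prime q" "\<forall>r. padic_abs p r = padic_abs q r"
  shows "p = q"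
proof (rule ccontr)
  assume ne: "p \<noteq> q"
  have "padic_abs p (of_nat p) = padic_abs q (of_nat p)" using assms by blast
  moreover have "padic_abs p (of_nat p) = real p powr (-1)"
    using assms(1) by (simp add: padic_abs_def padic_val_prime prime_gt_0_nat)
  moreover have "padic_abs q (of_nat p) = 1"
    using assms ne by (simp add: padic_abs_def padic_val_prime prime_gt_0_nat)
  ultimately have "real p powr (-1) = 1" by simp
  thus False using prime_gt_1_nat[OF assms(1)] by (simp add: powr_minus)
qed

lemma alg_int_iff: "alg_int x \<longleftrightarrow> algebraic_int x"
  unfolding alg_int_def algebraic_int_altdef_ipoly by blast

lemma alg_int_1: "alg_int 1"
  unfolding alg_int_iff by (rule int_imp_algebraic_int) simp

lemma unit_1: "alg_int_unit 1"
  unfolding alg_int_unit_def using alg_int_1 by simp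

lemma unit_mult: "alg_int_unit x \<Longrightarrow> alg_int_unit y \<Longrightarrow> alg_int_unit (x * y)"
  unfolding alg_int_unit_def by (auto intro: alg_int_mult simp: inverse_mult_distrib)

lemma unit_inv: "alg_int_unit x \<Longrightarrow> alg_int_unit (inverse x)"
  unfolding alg_int_unit_def by auto

lemma unit_pow: "alg_int_unit x \<Longrightarrow> alg_int_unit (x ^ n)"
  by (induction n) (auto intro: unit_mult unit_1)

lemma piS_self: "x \<noteq> 0 \<Longrightarrow> x \<in> piS x"
  unfolding piS_def using unit_1 by simp

lemma piS_eq: assumes "x \<in> piS r" "r \<noteq> 0" shows "piS x = piS r"
proof -
  have x: "x \<noteq> 0" "alg_int_unit (x / r)" using assms unfolding piS_def by auto
  show ?thesis
  proof (rule Set.set_eqI)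
    fix y
    have e1: "y / r = (y / x) * (x / r)" and e2: "y / x = (y / r) * inverse (x / r)" using x assms(2) by (auto simp: field_simps)
    have "alg_int_unit (y / x) \<longleftrightarrow> alg_int_unit (y / r)"
    proof
      assume "alg_int_unit (y / x)" thus "alg_int_unit (y / r)" unfolding e1 using x(2) by (rule unit_mult)
    next
      assume "alg_int_unit (y / r)" thus "alg_int_unit (y / x)" unfolding e2 using unit_inv[OF x(2)] by (rule unit_mult)
    qed
    thus "y \<in> piS x \<longleftrightarrow> y \<in> piS r" unfolding piS_def by simp
  qed
qed

lemma nf_nat: "number_field K \<Longrightarrow> of_nat n \<in> K"
  by (induction n) (auto simp: number_field_def)

lemma nf_int: assumes "number_field K" shows "of_int n \<in> K"
proof (cases "n \<ge> 0")
  case True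
  hence "(of_int n :: complex) = of_nat (nat n)" by simp
  thus ?thesis using nf_nat[OF assms] by simp
next
  case False
  hence "(of_int n :: complex) = 0 - of_nat (nat (- n))" by simp
  moreover have "0 - of_nat (nat (- n)) \<in> K" using nf_nat[OF assms, of "nat (-n)"] assms unfolding number_field_def by blast
  ultimately show ?thesis by simp
qed

lemma nf_div: assumes "number_field K" "x \<in> K" "y \<in> K" shows "x / y \<in> K"
proof (cases "y = 0")
  case True thus ?thesis using assms unfolding number_field_def by simp
next
  case False
  hence "inverse y \<in> K" using assms unfolding number_field_def by blast
  thus ?thesis using assms unfolding number_field_def by (simp add: divide_inverse)
qed

lemma nf_mult: "number_field K \<Longrightarrow> x \<in> K \<Longrightarrow> y \<in> K \<Longrightarrow> x * y \<in> K"
  unfolding number_field_def by blast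

lemma nf_pow: "number_field K \<Longrightarrow> x \<in> K \<Longrightarrow> x ^ n \<in> K"
  by (induction n) (auto simp: number_field_def)

lemma nf_rat: assumes "number_field K" shows "of_rat q \<in> K"
proof -
  obtain a b where ab: "b \<noteq> 0" "q = of_int a / of_int b" by (rule rat_frac)
  hence "(of_rat q :: complex) = of_int a / of_int b" by (simp add: of_rat_divide)
  thus ?thesis using nf_div[OF assms nf_int[OF assms] nf_int[OF assms]] by simp
qed

lemma QQ_sub: "number_field K \<Longrightarrow> QQ \<subseteq> K"
  unfolding QQ_def using nf_rat by blast

lemma nf_QQ: "number_field QQ"
  unfolding number_field_def QQ_def
proof (intro conjI ballI impI)
  show "0 \<in> range (of_rat :: rat \<Rightarrow> complex)" by (metis of_rat_0 rangeI)
  show "1 \<in> range (of_rat :: rat \<Rightarrow> complex)" by (metis of_rat_1 rangeI)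
  fix x y assume "x \<in> range (of_rat :: rat \<Rightarrow> complex)" "y \<in> range (of_rat :: rat \<Rightarrow> complex)"
  then obtain a b where xy: "x = of_rat a" "y = of_rat b" by auto
  show "x + y \<in> range of_rat" unfolding xy by (metis of_rat_add rangeI)
  show "x - y \<in> range of_rat" unfolding xy by (metis of_rat_diff rangeI)
  show "x * y \<in> range of_rat" unfolding xy by (metis of_rat_mult rangeI)
next
  fix x assume "x \<in> range (of_rat :: rat \<Rightarrow> complex)" "x \<noteq> 0"
  then obtain a where "x = of_rat a" by auto
  thus "inverse x \<in> range of_rat" by (metis of_rat_inverse rangeI)
next
  show "\<exists>bs :: complex list. \<forall>x\<in>range of_rat. \<exists>q :: nat \<Rightarrow> rat. x = (\<Sum>i<length bs. of_rat (q i) * bs ! i)"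
  proof (intro exI[of _ "[1]"] ballI)
    fix x :: complex assume "x \<in> range of_rat"
    then obtain a where "x = of_rat a" by auto
    thus "\<exists>q :: nat \<Rightarrow> rat. x = (\<Sum>i<length [1]. of_rat (q i) * [1] ! i)"
      by (intro exI[of _ "\<lambda>_. a"]) simp
  qed
qed

lemma pp_spec: assumes "nonarch_place K w"
  shows "prime (place_prime w) \<and> (\<forall>q. w (of_rat q) = padic_abs (place_prime w) q)"
proof -
  obtain p where p: "prime p" "\<forall>q. w (of_rat q) = padic_abs p q"
    using assms unfolding nonarch_place_def by blast
  have "place_prime w = p" unfolding place_prime_def
  proof (rule the_equality)
    show "prime p \<and> (\<forall>q. w (of_rat q) = padic_abs p q)" using p by blast
    fix p' assume "prime p' \<and> (\<forall>q. w (of_rat q) = padic_abs p' q)"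
    hence "\<forall>q. padic_abs p' q = padic_abs p q" "prime p'" using p by auto
    thus "p' = p" using padic_abs_unique p(1) by blast
  qed
  thus ?thesis using p by simp
qed

lemma place_pow: assumes "nonarch_place K w" "number_field K" "x \<in> K"
  shows "w (x ^ n) = w x ^ n"
proof (induction n)
  case 0
  have "w (of_rat 1) = padic_abs (place_prime w) 1" using pp_spec[OF assms(1)] by blast
  thus ?case using prime_gt_0_nat pp_spec[OF assms(1)] by (simp add: padic_abs_def padic_val_def)
next
  case (Suc n)
  have "w (x ^ Suc n) = w x * w (x ^ n)"
    using assms nf_pow[OF assms(2,3)] unfolding nonarch_place_def by simp
  thus ?case using Suc by simp
qed

lemma place_sum: assumes "nonarch_place K w" "number_field K" "finite F"
  "\<forall>i\<in>F. f i \<in> K" "\<forall>i\<in>F. w (f i) \<le> M" "M \<ge> 0"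
  shows "sum f F \<in> K \<and> w (sum f F) \<le> M"
  using assms(3-5)
proof (induction F rule: finite_induct)
  case empty
  have "w 0 = 0" using assms(1,2) unfolding nonarch_place_def number_field_def by blast
  thus ?case using assms(2,6) unfolding number_field_def by simp
next
  case (insert i F)
  hence IH: "sum f F \<in> K" "w (sum f F) \<le> M" by auto
  have fi: "f i \<in> K" "w (f i) \<le> M" using insert by auto
  have "w (f i + sum f F) \<le> max (w (f i)) (w (sum f F))"
    using assms(1) IH fi unfolding nonarch_place_def by blast
  moreover have "f i + sum f F \<in> K" using assms(2) IH fi unfolding number_field_def by blast
  ultimately show ?case using insert IH fi by simp
qed

lemma place_int: assumes "nonarch_place K w" shows "w (of_int c) \<le> 1"
proof -
  have "w (of_rat (of_int c)) = padic_abs (place_prime w) (of_int c)" using pp_spec[OF assms] by blast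
  thus ?thesis using padic_abs_int_le1 pp_spec[OF assms] by simp
qed

lemma place_le1: assumes "nonarch_place K w" "number_field K" "x \<in> K" "alg_int x"
  shows "w x \<le> 1"
proof (rule ccontr)
  assume "\<not> w x \<le> 1"
  hence x1: "w x > 1" by simp
  obtain m where m: "m > 0" "\<forall>s<m. \<exists>c::nat\<Rightarrow>int. x ^ Suc s = (\<Sum>i<m. of_int (c i) * x ^ i)"
    using alg_int_powers[OF assms(4)] by blast
  obtain c where c: "x ^ m = (\<Sum>i<m. of_int (c i) * x ^ i)" using m by (metis Suc_pred' lessI)
  have "\<forall>i\<in>{..<m}. of_int (c i) * x ^ i \<in> K"
    using nf_mult[OF assms(2) nf_int[OF assms(2)] nf_pow[OF assms(2,3)]] by blast
  moreover have "\<forall>i\<in>{..<m}. w (of_int (c i) * x ^ i) \<le> w x ^ (m - 1)"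
  proof
    fix i assume i: "i \<in> {..<m}"
    have "w (of_int (c i) * x ^ i) = w (of_int (c i)) * w x ^ i"
      using assms(1) nf_int[OF assms(2)] nf_pow[OF assms(2,3)] place_pow[OF assms(1-3)]
      unfolding nonarch_place_def by simp
    also have "\<dots> \<le> 1 * w x ^ (m - 1)"
    proof (rule mult_mono)
      show "w (of_int (c i)) \<le> 1" by (rule place_int[OF assms(1)])
      show "w x ^ i \<le> w x ^ (m - 1)" using i x1 by (intro power_increasing) auto
    qed (use x1 in auto)
    finally show "w (of_int (c i) * x ^ i) \<le> w x ^ (m - 1)" by simp
  qed
  ultimately have "w (x ^ m) \<le> w x ^ (m - 1)"
    using place_sum[OF assms(1,2), of "{..<m}" "\<lambda>i. of_int (c i) * x ^ i" "w x ^ (m - 1)"] x1 c by simp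
  moreover have "w (x ^ m) = w x ^ m" by (rule place_pow[OF assms(1-3)])
  moreover have "w x ^ (m - 1) < w x ^ m" using x1 m(1) by (intro power_strict_increasing) auto
  ultimately show False by simp
qed

lemma place_unit: assumes "nonarch_place K w" "number_field K" "x \<in> K" "alg_int_unit x"
  shows "w x = 1"
proof -
  have x0: "x \<noteq> 0" and ix: "inverse x \<in> K" using assms unfolding alg_int_unit_def number_field_def by auto
  have "w x \<le> 1" "w (inverse x) \<le> 1" using place_le1[OF assms(1,2)] assms(3,4) ix unfolding alg_int_unit_def by auto
  moreover have "w x * w (inverse x) = w (x * inverse x)" using assms(1,3) ix unfolding nonarch_place_def by simp
  moreover have "w 1 = 1" using place_pow[OF assms(1-3), of 0] by simp
  moreover have "w x \<ge> 0" "w (inverse x) \<ge> 0" using assms(1,3) ix unfolding nonarch_place_def by auto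
  moreover have "x * inverse x = 1" using x0 by simp
  ultimately have "w x * w (inverse x) = 1" "w x \<le> 1" "w (inverse x) \<le> 1" "w x \<ge> 0" by auto
  moreover from this have "w x * w (inverse x) \<le> w x * 1" by (intro mult_left_mono) auto
  ultimately show ?thesis by simp
qed

definition vq :: "nat \<Rightarrow> complex \<Rightarrow> real" where
  "vq p x = (if x \<in> QQ then padic_abs p (THE q. x = of_rat q) else 0)"

lemma vq_rat: "vq p (of_rat q) = padic_abs p q"
proof -
  have "(THE q'. (of_rat q :: complex) = of_rat q') = q" by (rule the_equality) auto
  thus ?thesis unfolding vq_def QQ_def by simp
qed

lemma vq_place: assumes "prime p" shows "nonarch_place QQ (vq p)"
  unfolding nonarch_place_def
proof (intro conjI allI ballI impI)
  fix x assume "x \<notin> QQ" thus "vq p x = 0" by (simp add: vq_def)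
next
  fix x assume "x \<in> QQ"
  then obtain a where x: "x = of_rat a" unfolding QQ_def by auto
  show "0 \<le> vq p x" unfolding x vq_rat by (rule padic_abs_nonneg)
  show "vq p x = 0 \<longleftrightarrow> x = 0" unfolding x vq_rat using padic_abs_pos[OF assms, of a]
    by (auto simp: padic_abs_def)
next
  fix x y assume "x \<in> QQ" "y \<in> QQ"
  then obtain a b where xy: "x = of_rat a" "y = of_rat b" unfolding QQ_def by auto
  show "vq p (x * y) = vq p x * vq p y"
    unfolding xy of_rat_mult[symmetric] vq_rat using padic_abs_mult[OF assms] by simp
  show "vq p (x + y) \<le> max (vq p x) (vq p y)"
    unfolding xy of_rat_add[symmetric] vq_rat using padic_abs_add[OF assms] by simp
next
  show "\<exists>p'. prime p' \<and> (\<forall>q. vq p (of_rat q) = padic_abs p' q)"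
    using assms vq_rat by blast
qed

lemma pp_vq: assumes "prime p" shows "place_prime (vq p) = p"
proof -
  have "prime (place_prime (vq p))" "\<forall>q. padic_abs (place_prime (vq p)) q = padic_abs p q"
    using pp_spec[OF vq_place[OF assms]] vq_rat by auto
  thus ?thesis using padic_abs_unique assms by blast
qed

lemma normS_rat:
  assumes K: "number_field K" and sk: "in_SK K (piS (of_rat r))" and r: "r \<noteq> 0"
    and w: "nonarch_place K w"
  shows "normS K w (piS (of_rat r)) = padic_abs (place_prime w) r"
proof -
  define \<alpha> where "\<alpha> = piS (of_rat r)"
  define P where "P = (\<lambda>(n, y). n > 0 \<and> y \<in> K \<and> y \<noteq> 0 \<and> powS \<alpha> n = piS y)"
  have "\<exists>z. P z" using sk unfolding in_SK_def P_def \<alpha>_def by auto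
  hence Pz: "P (SOME z. P z)" by (rule someI_ex)
  obtain n y where ny: "(SOME z. P z) = (n, y)" by (cases "SOME z. P z")
  have "P (n, y)" using Pz ny by simp
  hence n: "n > 0" and y: "y \<in> K" "y \<noteq> 0" "powS \<alpha> n = piS y" unfolding P_def by auto
  have norm: "normS K w \<alpha> = w y powr (1 / real n)"
    unfolding normS_def using ny unfolding P_def by simp
  define r' :: complex where "r' = of_rat r"
  have r'0: "r' \<noteq> 0" using r by (simp add: r'_def)
  have r'K: "r' \<in> K" unfolding r'_def by (rule nf_rat[OF K])
  define x0 where "x0 = (SOME x. x \<in> \<alpha>)"
  have "r' \<in> \<alpha>" unfolding \<alpha>_def r'_def using piS_self r'0 r'_def by simp
  hence x0: "x0 \<in> \<alpha>" unfolding x0_def by (rule someI)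
  hence x0u: "x0 \<noteq> 0" "alg_int_unit (x0 / r')" unfolding \<alpha>_def piS_def r'_def by auto
  have "powS \<alpha> n = piS (x0 ^ n)" unfolding powS_def x0_def ..
  hence "y \<in> piS (x0 ^ n)" using y piS_self[of y] by simp
  hence yu: "alg_int_unit (y / x0 ^ n)" unfolding piS_def by simp
  define z where "z = y / r' ^ n"
  have ze: "z = (y / x0 ^ n) * (x0 / r') ^ n" unfolding z_def using x0u r'0 by (simp add: field_simps)
  have zu: "alg_int_unit z" unfolding ze by (rule unit_mult[OF yu unit_pow[OF x0u(2)]])
  have zK: "z \<in> K" unfolding z_def by (rule nf_div[OF K y(1) nf_pow[OF K r'K]])
  have "y = r' ^ n * z" unfolding z_def using r'0 by simp
  hence "w y = w (r' ^ n) * w z" using w zK nf_pow[OF K r'K] unfolding nonarch_place_def by simp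
  also have "w z = 1" by (rule place_unit[OF w K zK zu])
  also have "w (r' ^ n) = w r' ^ n" by (rule place_pow[OF w K r'K])
  also have "w r' = padic_abs (place_prime w) r" unfolding r'_def using pp_spec[OF w] by blast
  finally have wy: "w y = padic_abs (place_prime w) r ^ n" by simp
  have pos: "padic_abs (place_prime w) r > 0" using padic_abs_pos pp_spec[OF w] r by blast
  have "w y powr (1 / real n) = (padic_abs (place_prime w) r powr real n) powr (1 / real n)"
    unfolding wy using powr_realpow[OF pos] by simp
  also have "\<dots> = padic_abs (place_prime w) r" using n pos by (simp add: powr_powr)
  finally show ?thesis using norm unfolding \<alpha>_def by simp
qed

lemma SK_QQ: assumes "r \<noteq> 0" shows "number_field QQ \<and> in_SK QQ (piS (of_rat r))"
proof -
  define r' :: complex where "r' = of_rat r"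
  have r'0: "r' \<noteq> 0" using assms by (simp add: r'_def)
  have "algebraic r'" unfolding r'_def by (rule rat_imp_algebraic) simp
  hence S: "piS r' \<in> S_set" unfolding S_set_def using r'0 by blast
  define x0 where "x0 = (SOME x. x \<in> piS r')"
  have x0: "x0 \<in> piS r'" unfolding x0_def by (rule someI[of _ r']) (rule piS_self[OF r'0])
  have "powS (piS r') 1 = piS x0" unfolding powS_def x0_def by simp
  also have "\<dots> = piS r'" by (rule piS_eq[OF x0 r'0])
  finally have "powS (piS r') 1 = piS r'" .
  moreover have "r' \<in> QQ" unfolding QQ_def r'_def by simp
  ultimately have "in_SK QQ (piS r')" unfolding in_SK_def using S r'0 by (intro conjI exI[of _ 1]) auto
  thus ?thesis using nf_QQ unfolding r'_def by simp
qed

definition KK :: "rat \<Rightarrow> complex set" where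
  "KK r = (SOME K. number_field K \<and> in_SK K (piS (of_rat r)))"

lemma KK: assumes "r \<noteq> 0" shows "number_field (KK r) \<and> in_SK (KK r) (piS (of_rat r))"
  unfolding KK_def by (rule someI_ex) (use SK_QQ[OF assms] in blast)

definition Ws :: "complex set \<Rightarrow> nat \<Rightarrow> (complex \<Rightarrow> real) set" where
  "Ws K p = {w. nonarch_place K w \<and> place_prime w = p}"

lemma PhiS_formula: assumes r: "r \<noteq> 0"
  shows "PhiS c (piS (of_rat r)) =
    (\<Sum>w\<in>{w. nonarch_place (KK r) w \<and> padic_val (place_prime w) r \<noteq> 0}.
        - real_of_rat (c (KK r, w)) * real_of_int (padic_val (place_prime w) r))"
proof -
  have K: "number_field (KK r)" and sk: "in_SK (KK r) (piS (of_rat r))" using KK[OF r] by auto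
  have PhiS: "PhiS c (piS (of_rat r)) = (\<Sum>v \<in> {v. nonarch_place (KK r) v \<and> normS (KK r) v (piS (of_rat r)) \<noteq> 1}.
          real_of_rat (c (KK r, v)) / ln (real (place_prime v)) * ln (normS (KK r) v (piS (of_rat r))))"
    unfolding PhiS_def KK_def[symmetric] Let_def ..
  have key: "padic_abs (place_prime w) r = real (place_prime w) powr (- real_of_int (padic_val (place_prime w) r))"
    "real (place_prime w) > 1" if "nonarch_place (KK r) w" for w
    using r pp_spec[OF that] prime_gt_1_nat by (auto simp: padic_abs_def)
  show ?thesis unfolding PhiS
  proof (rule sum.cong)
    show "{v. nonarch_place (KK r) v \<and> normS (KK r) v (piS (of_rat r)) \<noteq> 1} =
          {w. nonarch_place (KK r) w \<and> padic_val (place_prime w) r \<noteq> 0}"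
    proof (rule Set.set_eqI)
      fix w
      show "w \<in> {v. nonarch_place (KK r) v \<and> normS (KK r) v (piS (of_rat r)) \<noteq> 1} \<longleftrightarrow>
            w \<in> {w. nonarch_place (KK r) w \<and> padic_val (place_prime w) r \<noteq> 0}"
      proof (cases "nonarch_place (KK r) w")
        case True
        have nr: "normS (KK r) w (piS (of_rat r)) = real (place_prime w) powr (- real_of_int (padic_val (place_prime w) r))"
          using normS_rat[OF K sk r True] key[OF True] by simp
        have "(real (place_prime w) powr (- real_of_int (padic_val (place_prime w) r)) = 1) \<longleftrightarrow> (- real_of_int (padic_val (place_prime w) r) = 0)"
          by (rule powr_eq_one_iff[OF key(2)[OF True]])
        thus ?thesis using nr True by simp
      qed simp
    qed
  next
    fix w assume "w \<in> {w. nonarch_place (KK r) w \<and> padic_val (place_prime w) r \<noteq> 0}"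
    hence w: "nonarch_place (KK r) w" by simp
    have nr: "normS (KK r) w (piS (of_rat r)) = real (place_prime w) powr (- real_of_int (padic_val (place_prime w) r))"
      using normS_rat[OF K sk r w] key[OF w] by simp
    have "ln (real (place_prime w)) > 0" using key(2)[OF w] by simp
    thus "real_of_rat (c (KK r, w)) / ln (real (place_prime w)) * ln (normS (KK r) w (piS (of_rat r))) =
        - real_of_rat (c (KK r, w)) * real_of_int (padic_val (place_prime w) r)"
      unfolding nr by (simp add: field_simps)
  qed
qed

lemma cons_W: assumes c: "consistent c" and K: "number_field K" and v: "nonarch_place QQ v"
  shows "c (QQ, v) = (\<Sum>w\<in>Ws K (place_prime v). c (K, w))"
proof -
  have "c (QQ, v) = (\<Sum>w \<in> {w. nonarch_place K w \<and> (\<forall>x\<in>QQ. w x = v x)}. c (K, w))"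
    using c nf_QQ K QQ_sub[OF K] v unfolding consistent_def by blast
  also have "{w. nonarch_place K w \<and> (\<forall>x\<in>QQ. w x = v x)} = Ws K (place_prime v)"
  proof (intro Set.set_eqI iffI)
    fix w assume "w \<in> {w. nonarch_place K w \<and> (\<forall>x\<in>QQ. w x = v x)}"
    hence w: "nonarch_place K w" and eq: "\<forall>x\<in>QQ. w x = v x" by auto
    have "\<forall>q. padic_abs (place_prime w) q = padic_abs (place_prime v) q"
      using eq pp_spec[OF w] pp_spec[OF v] unfolding QQ_def by auto
    hence "place_prime w = place_prime v" using padic_abs_unique pp_spec[OF w] pp_spec[OF v] by blast
    thus "w \<in> Ws K (place_prime v)" using w by (simp add: Ws_def)
  next
    fix w assume "w \<in> Ws K (place_prime v)"
    hence w: "nonarch_place K w" and e: "place_prime w = place_prime v" by (auto simp: Ws_def)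
    have "\<forall>x\<in>QQ. w x = v x" using pp_spec[OF w] pp_spec[OF v] e unfolding QQ_def by auto
    thus "w \<in> {w. nonarch_place K w \<and> (\<forall>x\<in>QQ. w x = v x)}" using w by simp
  qed
  finally show ?thesis .
qed

lemma size_pf: "n > 0 \<Longrightarrow> int (size (prime_factorization n)) = (\<Sum>p\<in>prime_factors n. int (multiplicity p n))"
  for n :: nat
proof -
  have "size (prime_factorization n) = sum (count (prime_factorization n)) (prime_factors n)"
    by (rule size_multiset_overloaded_eq)
  also have "\<dots> = (\<Sum>p\<in>prime_factors n. multiplicity p n)"
    by (rule sum.cong) (auto intro: count_prime_factorization_prime)
  finally show ?thesis by simp
qed

definition Pr :: "rat \<Rightarrow> nat set" where "Pr r = {p. prime p \<and> padic_val p r \<noteq> 0}"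

lemma Omega_sum: assumes r: "r \<noteq> 0"
  shows "finite (Pr r) \<and> Omega r = (\<Sum>p\<in>Pr r. padic_val p r)"
proof -
  obtain a b where q: "quotient_of r = (a, b)" by (cases "quotient_of r")
  have b: "b > 0" using q quotient_of_denom_pos by blast
  have a: "a \<noteq> 0" using quotient_of_div[OF q] r by auto
  define A where "A = nat \<bar>a\<bar>"
  define B where "B = nat \<bar>b\<bar>"
  have A0: "A > 0" and B0: "B > 0" using a b by (auto simp: A_def B_def)
  have pv: "padic_val p r = int (multiplicity p A) - int (multiplicity p B)" for p
    unfolding padic_val_def q A_def B_def by (simp add: mult_int_abs)
  define F where "F = prime_factors A \<union> prime_factors B"
  have fin: "finite F" unfolding F_def by simp
  have sub: "Pr r \<subseteq> F"
  proof
    fix p assume "p \<in> Pr r"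
    hence p: "prime p" "multiplicity p A \<noteq> 0 \<or> multiplicity p B \<noteq> 0" unfolding Pr_def pv by auto
    have "p dvd A \<or> p dvd B"
    proof (rule ccontr)
      assume "\<not> (p dvd A \<or> p dvd B)"
      hence "multiplicity p A = 0" "multiplicity p B = 0" by (simp_all add: not_dvd_imp_multiplicity_0)
      thus False using p(2) by simp
    qed
    thus "p \<in> F" unfolding F_def using A0 B0 p(1) by (auto simp: in_prime_factors_iff)
  qed
  have "(\<Sum>p\<in>Pr r. padic_val p r) = (\<Sum>p\<in>F. padic_val p r)"
    by (rule sum.mono_neutral_left[OF fin sub]) (auto simp: Pr_def F_def in_prime_factors_iff)
  also have "\<dots> = (\<Sum>p\<in>F. int (multiplicity p A)) - (\<Sum>p\<in>F. int (multiplicity p B))"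
    unfolding pv by (simp add: sum_subtractf)
  also have "(\<Sum>p\<in>F. int (multiplicity p A)) = (\<Sum>p\<in>prime_factors A. int (multiplicity p A))"
    by (rule sum.mono_neutral_right[OF fin]) (auto simp: F_def in_prime_factors_iff not_dvd_imp_multiplicity_0)
  also have "(\<Sum>p\<in>F. int (multiplicity p B)) = (\<Sum>p\<in>prime_factors B. int (multiplicity p B))"
    by (rule sum.mono_neutral_right[OF fin]) (auto simp: F_def in_prime_factors_iff not_dvd_imp_multiplicity_0)
  finally have "(\<Sum>p\<in>Pr r. padic_val p r) = Omega r"
    unfolding Omega_def q A_def[symmetric] B_def[symmetric] split using size_pf[OF A0] size_pf[OF B0] by simp
  thus ?thesis using finite_subset[OF sub fin] by simp
qed

theorem theorem2p1:
  fixes c :: "complex set \<times> (complex \<Rightarrow> real) \<Rightarrow> rat"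
  assumes "consistent c"
  shows "(\<forall>r :: rat. r \<noteq> 0 \<longrightarrow> PhiS c (piS (of_rat r)) = real_of_int (Omega r))
     \<longleftrightarrow> (\<forall>v. nonarch_place QQ v \<longrightarrow> c (QQ, v) = -1)"
proof
  assume H: "\<forall>r :: rat. r \<noteq> 0 \<longrightarrow> PhiS c (piS (of_rat r)) = real_of_int (Omega r)"
  show "\<forall>v. nonarch_place QQ v \<longrightarrow> c (QQ, v) = -1"
  proof (intro allI impI)
    fix v assume v: "nonarch_place QQ v"
    define p where "p = place_prime v"
    have p: "prime p" using pp_spec[OF v] by (simp add: p_def)
    define r :: rat where "r = of_nat p"
    have r0: "r \<noteq> 0" using p by (simp add: r_def prime_gt_0_nat)
    define K where "K = KK r"
    have K: "number_field K" using KK[OF r0] by (simp add: K_def)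
    have Om: "Omega r = 1"
      unfolding Omega_def r_def using p
      by (simp add: of_rat_of_nat_eq quotient_of_int[of "int p", simplified] prime_factorization_prime)
    have set: "{w. nonarch_place K w \<and> padic_val (place_prime w) r \<noteq> 0} = Ws K p"
    proof (rule Set.set_eqI)
      fix w
      show "w \<in> {w. nonarch_place K w \<and> padic_val (place_prime w) r \<noteq> 0} \<longleftrightarrow> w \<in> Ws K p"
      proof (cases "nonarch_place K w")
        case True
        hence "prime (place_prime w)" using pp_spec by blast
        hence "padic_val (place_prime w) r = (if place_prime w = p then 1 else 0)"
          unfolding r_def using padic_val_prime[OF _ p] by simp
        thus ?thesis using True unfolding Ws_def by auto
      qed (auto simp: Ws_def)
    qed
    have "PhiS c (piS (of_rat r)) = (\<Sum>w\<in>Ws K p. - real_of_rat (c (K, w)) * real_of_int (padic_val (place_prime w) r))"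
      using PhiS_formula[OF r0, of c] set unfolding K_def by simp
    also have "\<dots> = (\<Sum>w\<in>Ws K p. - real_of_rat (c (K, w)))"
      by (rule sum.cong) (auto simp: Ws_def r_def padic_val_prime p)
    also have "\<dots> = - real_of_rat (\<Sum>w\<in>Ws K p. c (K, w))"
      by (simp add: of_rat_sum sum_negf)
    also have "(\<Sum>w\<in>Ws K p. c (K, w)) = c (QQ, v)"
      using cons_W[OF assms K v] by (simp add: p_def)
    finally have "- real_of_rat (c (QQ, v)) = 1" using H r0 Om by simp
    hence "real_of_rat (c (QQ, v)) = real_of_rat (-1)" by simp
    thus "c (QQ, v) = -1" by (simp only: of_rat_eq_iff)
  qed
next
  assume C: "\<forall>v. nonarch_place QQ v \<longrightarrow> c (QQ, v) = -1"
  show "\<forall>r :: rat. r \<noteq> 0 \<longrightarrow> PhiS c (piS (of_rat r)) = real_of_int (Omega r)"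
  proof (intro allI impI)
    fix r :: rat assume r0: "r \<noteq> 0"
    define K where "K = KK r"
    have K: "number_field K" using KK[OF r0] by (simp add: K_def)
    have Wsum: "(\<Sum>w\<in>Ws K p. c (K, w)) = -1" if "prime p" for p
    proof -
      have "c (QQ, vq p) = (\<Sum>w\<in>Ws K p. c (K, w))"
        using cons_W[OF assms K vq_place[OF that]] pp_vq[OF that] by simp
      thus ?thesis using C vq_place[OF that] by simp
    qed
    have finW: "finite (Ws K p)" if "prime p" for p
    proof (rule ccontr)
      assume "infinite (Ws K p)"
      hence "(\<Sum>w\<in>Ws K p. c (K, w)) = 0" by simp
      thus False using Wsum[OF that] by simp
    qed
    have set: "{w. nonarch_place K w \<and> padic_val (place_prime w) r \<noteq> 0} = (\<Union>p\<in>Pr r. Ws K p)"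
    proof (rule Set.set_eqI)
      fix w
      show "w \<in> {w. nonarch_place K w \<and> padic_val (place_prime w) r \<noteq> 0} \<longleftrightarrow> w \<in> (\<Union>p\<in>Pr r. Ws K p)"
      proof (cases "nonarch_place K w")
        case True
        hence "prime (place_prime w)" using pp_spec by blast
        thus ?thesis using True unfolding Ws_def Pr_def by auto
      qed (auto simp: Ws_def)
    qed
    have fP: "finite (Pr r)" and Om: "Omega r = (\<Sum>p\<in>Pr r. padic_val p r)" using Omega_sum[OF r0] by auto
    have "PhiS c (piS (of_rat r)) = (\<Sum>w\<in>(\<Union>p\<in>Pr r. Ws K p). - real_of_rat (c (K, w)) * real_of_int (padic_val (place_prime w) r))"
      using PhiS_formula[OF r0, of c] set unfolding K_def by simp
    also have "\<dots> = (\<Sum>p\<in>Pr r. \<Sum>w\<in>Ws K p. - real_of_rat (c (K, w)) * real_of_int (padic_val (place_prime w) r))"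
    proof (rule sum.UNION_disjoint[OF fP])
      show "\<forall>p\<in>Pr r. finite (Ws K p)" using finW by (auto simp: Pr_def)
      show "\<forall>p\<in>Pr r. \<forall>q\<in>Pr r. p \<noteq> q \<longrightarrow> Ws K p \<inter> Ws K q = {}" by (auto simp: Ws_def)
    qed
    also have "\<dots> = (\<Sum>p\<in>Pr r. real_of_int (padic_val p r))"
    proof (rule sum.cong[OF refl])
      fix p assume "p \<in> Pr r"
      hence p: "prime p" by (simp add: Pr_def)
      have "(\<Sum>w\<in>Ws K p. - real_of_rat (c (K, w)) * real_of_int (padic_val (place_prime w) r))
          = (\<Sum>w\<in>Ws K p. - real_of_rat (c (K, w)) * real_of_int (padic_val p r))"
        by (rule sum.cong) (auto simp: Ws_def)
      also have "\<dots> = - real_of_rat (\<Sum>w\<in>Ws K p. c (K, w)) * real_of_int (padic_val p r)"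
        by (simp add: of_rat_sum sum_distrib_right sum_negf)
      also have "\<dots> = real_of_int (padic_val p r)" using Wsum[OF p] by simp
      finally show "(\<Sum>w\<in>Ws K p. - real_of_rat (c (K, w)) * real_of_int (padic_val (place_prime w) r))
          = real_of_int (padic_val p r)" .
    qed
    also have "\<dots> = real_of_int (Omega r)" unfolding Om by simp
    finally show "PhiS c (piS (of_rat r)) = real_of_int (Omega r)" .
  qed
qed

end
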